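(* Let $m\in\mathbb N\cup\{\infty\}$ and let $f(\mathbf z)=\sum_{\mathbf p\in\mathbb Z_+^k,\,|\mathbf p|\le m}a_{\mathbf p}\mathbf z^{\mathbf p}$ be a holomorphic function on the polydisc $\mathbb D^k$ such that $\Re f(\mathbf z)\le1$ for all $\mathbf z\in\mathbb D^k$. (i) If $f(0)\ge0$, then $$\sum_{i=1}^k\Big|\frac{\partial f}{\partial z_i}(0)\Big|\le2(1-f(0))\cos\frac{\pi}{m+2}$$ (with $\cos\frac{\pi}{m+2}$ read as $1$ when $m=\infty$). (ii) If $m=\infty$ and $\mathbf a=(a_1,\dots,a_k)\in\mathbb D^k$ is such that $f(\mathbf a)\ge0$, then $$\sum_{i=1}^k(1-|a_i|^2)\Big|\frac{\partial f}{\partial z_i}(\mathbf a)\Big|\le2(1-f(\mathbf a)).$$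
   Context: $\mathbb D$ is the open unit disc, $\mathbf z^{\mathbf p}=z_1^{p_1}\cdots z_k^{p_k}$, $|\mathbf p|=p_1+\dots+p_k$; the condition $|\mathbf p|\le m$ is vacuous when $m=\infty$. "$f(0)\ge0$" means $f(0)$ is a nonnegative real number. *)

theory Defs
  imports "HOL-Analysis.Analysis" "HOL-Library.Extended_Nat"
begin

definition polydisc :: "('k::finite \<Rightarrow> complex) set" where
  "polydisc = {z. \<forall>i. norm (z i) < 1}"

definition mdeg :: "('k::finite \<Rightarrow> nat) \<Rightarrow> nat" where
  "mdeg p = (\<Sum>i\<in>UNIV. p i)"

definition monomial_val :: "('k::finite \<Rightarrow> complex) \<Rightarrow> ('k \<Rightarrow> nat) \<Rightarrow> complex" where
  "monomial_val z p = (\<Prod>i\<in>UNIV. z i ^ p i)"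

definition mindices :: "enat \<Rightarrow> ('k::finite \<Rightarrow> nat) set" where
  "mindices m = {p. enat (mdeg p) \<le> m}"

definition partial_deriv :: "(('k \<Rightarrow> complex) \<Rightarrow> complex) \<Rightarrow> 'k \<Rightarrow> ('k \<Rightarrow> complex) \<Rightarrow> complex" where
  "partial_deriv f i z = deriv (\<lambda>w. f (z(i := w))) (z i)"

definition cos_factor :: "enat \<Rightarrow> real" where
  "cos_factor m = (case m of enat n \<Rightarrow> cos (pi / (real n + 2)) | \<infinity> \<Rightarrow> 1)"

end

theory Submission
  imports Defs "HOL-Complex_Analysis.Complex_Analysis"
begin


lemma norm_mono_le:
  fixes z :: "'k::finite \<Rightarrow> complex"
  assumes "\<And>i. norm (z i) \<le> R"
  shows "norm (monomial_val z p) \<le> R ^ mdeg p"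
proof -
  have "norm (monomial_val z p) = (\<Prod>i\<in>UNIV. norm (z i) ^ p i)"
    by (simp add: monomial_val_def prod_norm[symmetric] norm_power)
  also have "\<dots> \<le> (\<Prod>i\<in>UNIV. R ^ p i)"
    by (intro prod_mono conjI power_mono assms) auto
  also have "\<dots> = R ^ mdeg p" by (simp add: mdeg_def power_sum)
  finally show ?thesis .
qed

lemma norm_mono_const:
  assumes "0 \<le> R"
  shows "norm (monomial_val (\<lambda>_::'k::finite. complex_of_real R) p) = R ^ mdeg p"
  using assms by (simp add: monomial_val_def prod_norm[symmetric] norm_power mdeg_def power_sum)

lemma abs_summ:
  fixes a :: "('k::finite \<Rightarrow> nat) \<Rightarrow> complex"
  assumes S: "\<forall>z\<in>polydisc. (\<lambda>p. a p * monomial_val z p) summable_on M"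
    and R: "0 \<le> R" "R < 1"
  shows "(\<lambda>p. norm (a p) * R ^ mdeg p) summable_on M"
proof -
  have "(\<lambda>_::'k. complex_of_real R) \<in> polydisc" using R by (simp add: polydisc_def)
  with S have "(\<lambda>p. a p * monomial_val (\<lambda>_. complex_of_real R) p) summable_on M" by blast
  hence "(\<lambda>p. norm (a p * monomial_val (\<lambda>_. complex_of_real R) p)) summable_on M"
    using summable_on_iff_abs_summable_on_complex[THEN iffD1] by blast
  thus ?thesis by (simp add: norm_mult norm_mono_const[OF R(1)])
qed

lemma ulim:
  fixes a :: "('k::finite \<Rightarrow> nat) \<Rightarrow> complex" and g :: "'c \<Rightarrow> 'k \<Rightarrow> complex"
  assumes S: "\<forall>z\<in>polydisc. (\<lambda>p. a p * monomial_val z p) summable_on M"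
    and F: "\<forall>z\<in>polydisc. f z = (\<Sum>\<^sub>\<infinity>p\<in>M. a p * monomial_val z p)"
    and R: "0 \<le> R" "R < 1"
    and K: "\<forall>t\<in>K. \<forall>i. norm (g t i) \<le> R"
  shows "uniform_limit K (\<lambda>X t. \<Sum>p\<in>X. a p * monomial_val (g t) p) (\<lambda>t. f (g t)) (finite_subsets_at_top M)"
proof (rule uniform_limitI)
  fix e :: real assume e: "0 < e"
  define h where "h p = norm (a p) * R ^ mdeg p" for p
  have gs: "h summable_on M" unfolding h_def by (rule abs_summ[OF S R])
  hence "(sum h \<longlongrightarrow> infsum h M) (finite_subsets_at_top M)"
    using has_sum_def has_sum_infsum by blast
  hence "\<forall>\<^sub>F X in finite_subsets_at_top M. dist (sum h X) (infsum h M) < e" using e tendstoD by blast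
  moreover have "\<forall>\<^sub>F X in finite_subsets_at_top M. finite X \<and> X \<subseteq> M" by auto
  ultimately show "\<forall>\<^sub>F X in finite_subsets_at_top M. \<forall>t\<in>K. dist (\<Sum>p\<in>X. a p * monomial_val (g t) p) (f (g t)) < e"
  proof eventually_elim
    case (elim X)
    show ?case
    proof
      fix t assume "t \<in> K"
      then have zR: "\<And>i. norm (g t i) \<le> R" using K by blast
      have zP: "g t \<in> polydisc" using zR R unfolding polydisc_def by (auto intro: le_less_trans)
      define q where "q p = a p * monomial_val (g t) p" for p
      have hs: "q summable_on M" unfolding q_def using S zP by blast
      have hsX: "q summable_on X" using elim by simp
      have "f (g t) - (\<Sum>p\<in>X. q p) = infsum q (M - X)"
        using infsum_Diff[OF hs hsX] elim F zP by (simp add: q_def[abs_def])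
      moreover have "norm (infsum q (M - X)) \<le> infsum h (M - X)"
      proof (rule norm_infsum_le[OF has_sum_infsum has_sum_infsum])
        show "q summable_on M - X" using summable_on_subset_banach[OF hs] by blast
        show "h summable_on M - X" using summable_on_subset_banach[OF gs] by blast
        fix p show "norm (q p) \<le> h p" unfolding q_def h_def norm_mult
          by (intro mult_left_mono norm_mono_le zR) auto
      qed
      moreover have "infsum h (M - X) = infsum h M - sum h X"
        using infsum_Diff[OF gs, of X] elim by simp
      ultimately have "norm (f (g t) - (\<Sum>p\<in>X. q p)) < e"
        using elim(1) by (simp add: dist_real_def)
      thus "dist (\<Sum>p\<in>X. a p * monomial_val (g t) p) (f (g t)) < e"
        by (simp add: q_def dist_norm norm_minus_commute)
    qed
  qed
qed

lemma compact_bound: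
  fixes g :: "'c::topological_space \<Rightarrow> 'k::finite \<Rightarrow> complex"
  assumes "compact K" "\<And>i. continuous_on K (\<lambda>t. g t i)" "\<And>t i. t \<in> K \<Longrightarrow> norm (g t i) < 1"
  shows "\<exists>R. 0 \<le> R \<and> R < 1 \<and> (\<forall>t\<in>K. \<forall>i. norm (g t i) \<le> R)"
proof (cases "K = {}")
  case True then show ?thesis by (intro exI[of _ 0]) auto
next
  case False
  have "\<forall>i. \<exists>R. R < 1 \<and> (\<forall>t\<in>K. norm (g t i) \<le> R)"
  proof
    fix i
    obtain t where "t \<in> K" "\<forall>s\<in>K. norm (g s i) \<le> norm (g t i)"
      using continuous_attains_sup[OF assms(1) False continuous_on_norm[OF assms(2)]] by blast
    thus "\<exists>R. R < 1 \<and> (\<forall>t\<in>K. norm (g t i) \<le> R)" using assms(3) by blast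
  qed
  then obtain Rf where Rf: "\<And>i. Rf i < 1" "\<And>i t. t \<in> K \<Longrightarrow> norm (g t i) \<le> Rf i" by metis
  define R where "R = Max (insert 0 (range Rf))"
  have "R < 1" unfolding R_def by (subst Max_less_iff) (auto simp: Rf)
  moreover have "0 \<le> R" unfolding R_def by (rule Max_ge) auto
  moreover have "Rf i \<le> R" for i unfolding R_def by (rule Max_ge) auto
  ultimately show ?thesis using Rf(2) by (meson order_trans)
qed

definition mderiv :: "('k::finite \<Rightarrow> complex) \<Rightarrow> ('k \<Rightarrow> nat) \<Rightarrow> 'k \<Rightarrow> complex" where
  "mderiv z p i = of_nat (p i) * z i ^ (p i - 1) * (\<Prod>j\<in>UNIV-{i}. z j ^ p j)"

lemma mono_deriv:
  fixes g :: "complex \<Rightarrow> 'k::finite \<Rightarrow> complex"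
  assumes "\<And>i. ((\<lambda>t. g t i) has_field_derivative g' i) (at t)"
  shows "((\<lambda>t. monomial_val (g t) p) has_field_derivative (\<Sum>i\<in>UNIV. g' i * mderiv (g t) p i)) (at t)"
proof -
  have "((\<lambda>u. \<Prod>i\<in>UNIV. g u i ^ p i) has_field_derivative
     (\<Sum>i\<in>UNIV. (of_nat (p i) * (g' i * g t i ^ (p i - Suc 0))) * (\<Prod>j\<in>UNIV-{i}. g t j ^ p j))) (at t)"
    by (rule has_field_derivative_prod) (intro DERIV_power assms)
  thus ?thesis unfolding monomial_val_def mderiv_def by (simp add: ac_simps)
qed

lemma path_deriv:
  fixes a :: "('k::finite \<Rightarrow> nat) \<Rightarrow> complex" and g :: "complex \<Rightarrow> 'k \<Rightarrow> complex"
  assumes S: "\<forall>z\<in>polydisc. (\<lambda>p. a p * monomial_val z p) summable_on M"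
    and F: "\<forall>z\<in>polydisc. f z = (\<Sum>\<^sub>\<infinity>p\<in>M. a p * monomial_val z p)"
    and r: "0 < r" and R: "0 \<le> R" "R < 1"
    and gb: "\<forall>t\<in>cball t0 r. \<forall>i. norm (g t i) \<le> R"
    and gd: "\<forall>t\<in>cball t0 r. \<forall>i. ((\<lambda>t. g t i) has_field_derivative g' i t) (at t)"
  shows "\<exists>D. ((\<lambda>t. f (g t)) has_field_derivative D) (at t0) \<and>
             ((\<lambda>p. a p * (\<Sum>i\<in>UNIV. g' i t0 * mderiv (g t0) p i)) has_sum D) M"
proof -
  define fn where "fn X t = (\<Sum>p\<in>X. a p * monomial_val (g t) p)" for X t
  define fn' where "fn' X t = (\<Sum>p\<in>X. a p * (\<Sum>i\<in>UNIV. g' i t * mderiv (g t) p i))" for X t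
  have der: "(fn X has_field_derivative fn' X t) (at t)" if "t \<in> cball t0 r" for X t
    unfolding fn_def fn'_def
    by (intro DERIV_sum DERIV_cmult mono_deriv) (use gd that in auto)
  have cont: "\<forall>\<^sub>F X in finite_subsets_at_top M. continuous_on (cball t0 r) (fn X) \<and>
      (\<forall>w\<in>ball t0 r. (fn X has_field_derivative fn' X w) (at w))"
  proof (intro always_eventually allI conjI ballI)
    fix X show "continuous_on (cball t0 r) (fn X)"
      by (rule DERIV_continuous_on[where D="fn' X"]) (use der has_field_derivative_at_within in blast)
  next
    fix X w assume "w \<in> ball t0 r" thus "(fn X has_field_derivative fn' X w) (at w)"
      using der by auto
  qed
  have ul: "uniform_limit (cball t0 r) fn (\<lambda>t. f (g t)) (finite_subsets_at_top M)"
    unfolding fn_def by (rule ulim[OF S F R gb])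
  obtain G' where G': "\<And>w. w \<in> ball t0 r \<Longrightarrow> ((\<lambda>t. f (g t)) has_field_derivative G' w) (at w) \<and>
      ((\<lambda>X. fn' X w) \<longlongrightarrow> G' w) (finite_subsets_at_top M)"
    using has_complex_derivative_uniform_limit[OF cont ul _ r] by auto
  have "t0 \<in> ball t0 r" using r by simp
  from G'[OF this] show ?thesis unfolding has_sum_def fn'_def by blast
qed

lemma pos_carath:
  assumes holo: "u holomorphic_on ball 0 1" and pos: "\<And>t. t \<in> ball 0 1 \<Longrightarrow> Re (u t) > 0"
  shows "norm (deriv u 0) \<le> 2 * Re (u 0)"
proof -
  define c where "c = u 0"
  have c0: "Re c > 0" using pos[of 0] by (simp add: c_def)
  have den: "u t + cnj c \<noteq> 0" if "t \<in> ball 0 1" for t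
  proof
    assume "u t + cnj c = 0"
    hence "Re (u t + cnj c) = 0" by simp
    thus False using pos[OF that] c0 by simp
  qed
  define G where "G t = (u t - c) / (u t + cnj c)" for t
  have holG: "G holomorphic_on ball 0 1"
    unfolding G_def by (intro holomorphic_intros holo) (use den in auto)
  have G0: "G 0 = 0" by (simp add: G_def c_def)
  have nG: "norm (G t) < 1" if "norm t < 1" for t
  proof -
    have tb: "t \<in> ball 0 1" using that by simp
    have "norm (u t - c) ^ 2 < norm (u t + cnj c) ^ 2"
      using pos[OF tb] c0 unfolding cmod_power2
      by (simp add: power2_eq_square algebra_simps)
    hence "norm (u t - c) < norm (u t + cnj c)"
      using power_less_imp_less_base by fastforce
    thus ?thesis using den[OF tb] by (simp add: G_def norm_divide divide_less_eq)
  qed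
  have "norm (deriv G 0) \<le> 1" using Schwarz_Lemma(2)[OF holG G0 nG, of 0] by simp
  have ud: "(u has_field_derivative deriv u 0) (at 0)"
    using holomorphic_derivI[OF holo] by simp
  have d0: "u 0 + cnj c \<noteq> 0" using den[of 0] by simp
  have "(G has_field_derivative ((deriv u 0 * (u 0 + cnj c) - (u 0 - c) * deriv u 0) / (u 0 + cnj c)^2)) (at 0)"
    unfolding G_def by (auto intro!: derivative_eq_intros ud simp: d0 power2_eq_square)
  hence "deriv G 0 = (deriv u 0 * (u 0 + cnj c) - (u 0 - c) * deriv u 0) / (u 0 + cnj c)^2"
    by (rule DERIV_imp_deriv)
  also have "\<dots> = deriv u 0 / (c + cnj c)"
    using d0 by (simp add: c_def power2_eq_square)
  also have "c + cnj c = of_real (2 * Re c)" by (rule complex_add_cnj)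
  finally have "norm (deriv u 0) / (2 * Re c) \<le> 1"
    using \<open>norm (deriv G 0) \<le> 1\<close> c0 by (simp add: norm_divide)
  thus ?thesis using c0 by (simp add: c_def divide_le_eq)
qed

lemma carath:
  assumes holo: "h holomorphic_on ball 0 1" and re: "\<And>t. t \<in> ball 0 1 \<Longrightarrow> Re (h t) \<le> 1"
  shows "norm (deriv h 0) \<le> 2 * (1 - Re (h 0))"
proof (rule field_le_epsilon)
  fix e :: real assume e: "0 < e"
  define u where "u t = complex_of_real (1 + e/2) - h t" for t
  have holu: "u holomorphic_on ball 0 1" unfolding u_def by (intro holomorphic_intros holo)
  have "norm (deriv u 0) \<le> 2 * Re (u 0)"
    by (rule pos_carath[OF holu]) (use re e in \<open>force simp: u_def\<close>)
  moreover have "deriv u 0 = - deriv h 0"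
  proof -
    have "(h has_field_derivative deriv h 0) (at 0)" using holomorphic_derivI[OF holo] by simp
    hence "(u has_field_derivative - deriv h 0) (at 0)"
      unfolding u_def by (auto intro!: derivative_eq_intros)
    thus ?thesis by (rule DERIV_imp_deriv)
  qed
  ultimately show "norm (deriv h 0) \<le> 2 * (1 - Re (h 0)) + e" by (simp add: u_def algebra_simps)
qed

lemma has_sum_sum_fin:
  fixes f :: "'i \<Rightarrow> 'a \<Rightarrow> complex"
  assumes "finite I" "\<And>i. i \<in> I \<Longrightarrow> (f i has_sum s i) A"
  shows "((\<lambda>x. \<Sum>i\<in>I. f i x) has_sum (\<Sum>i\<in>I. s i)) A"
  using assms
proof (induction I rule: finite_induct)
  case empty then show ?case by simp
next
  case (insert j I)
  have "((\<lambda>x. f j x + (\<Sum>i\<in>I. f i x)) has_sum (s j + (\<Sum>i\<in>I. s i))) A"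
    by (intro has_sum_add insert.prems insert.IH) auto
  thus ?case using insert.hyps by simp
qed

lemma partial_hs:
  fixes a :: "('k::finite \<Rightarrow> nat) \<Rightarrow> complex"
  assumes S: "\<forall>z\<in>polydisc. (\<lambda>p. a p * monomial_val z p) summable_on M"
    and F: "\<forall>z\<in>polydisc. f z = (\<Sum>\<^sub>\<infinity>p\<in>M. a p * monomial_val z p)"
    and b: "b \<in> polydisc"
  shows "((\<lambda>p. a p * mderiv b p i) has_sum partial_deriv f i b) M"
proof -
  define r where "r = (1 - norm (b i)) / 2"
  have bi: "norm (b i) < 1" using b by (simp add: polydisc_def)
  have r: "0 < r" using bi by (simp add: r_def)
  define g where "g w = b(i := w)" for w
  have gc: "continuous_on (cball (b i) r) (\<lambda>t. g t j)" for j
    by (cases "j = i") (auto simp: g_def intro!: continuous_intros)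
  have gn: "norm (g t j) < 1" if "t \<in> cball (b i) r" for t j
  proof (cases "j = i")
    case True
    have "norm t \<le> norm (b i) + norm (t - b i)" using norm_triangle_ineq[of "b i" "t - b i"] by simp
    also have "norm (t - b i) \<le> r" using that by (simp add: dist_norm norm_minus_commute)
    finally have "norm t \<le> norm (b i) + r" by simp
    moreover have "norm (b i) + r < 1" using bi by (simp add: r_def field_simps)
    ultimately have "norm t < 1" by linarith
    thus ?thesis using True by (simp add: g_def)
  next
    case False thus ?thesis using b by (simp add: g_def polydisc_def)
  qed
  obtain R where R: "0 \<le> R" "R < 1" "\<forall>t\<in>cball (b i) r. \<forall>j. norm (g t j) \<le> R"
    using compact_bound[of "cball (b i) r" g, OF compact_cball gc gn] by blast
  define g' where "g' j t = (if j = i then 1 else 0 :: complex)" for j and t :: complex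
  have gd: "\<forall>t\<in>cball (b i) r. \<forall>j. ((\<lambda>t. g t j) has_field_derivative g' j t) (at t)"
  proof (intro ballI allI)
    fix t j show "((\<lambda>t. g t j) has_field_derivative g' j t) (at t)"
      by (cases "j = i") (auto simp: g_def g'_def intro!: derivative_eq_intros)
  qed
  obtain D where D: "((\<lambda>t. f (g t)) has_field_derivative D) (at (b i))"
     "((\<lambda>p. a p * (\<Sum>j\<in>UNIV. g' j (b i) * mderiv (g (b i)) p j)) has_sum D) M"
    using path_deriv[OF S F r R(1,2) R(3) gd] by blast
  have "partial_deriv f i b = D" unfolding partial_deriv_def using DERIV_imp_deriv[OF D(1)]
    by (simp add: g_def)
  moreover have "(\<lambda>p. a p * (\<Sum>j\<in>UNIV. g' j (b i) * mderiv (g (b i)) p j)) = (\<lambda>p. a p * mderiv b p i)"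
  proof
    fix p
    have "(\<Sum>j\<in>UNIV. g' j (b i) * mderiv b p j) = (\<Sum>j\<in>UNIV. if j = i then mderiv b p j else 0)"
      by (rule sum.cong) (auto simp: g'_def)
    also have "\<dots> = mderiv b p i" by simp
    finally show "a p * (\<Sum>j\<in>UNIV. g' j (b i) * mderiv (g (b i)) p j) = a p * mderiv b p i"
      by (simp add: g_def)
  qed
  ultimately show ?thesis using D(2) by simp
qed

lemma chain:
  fixes a :: "('k::finite \<Rightarrow> nat) \<Rightarrow> complex"
  assumes S: "\<forall>z\<in>polydisc. (\<lambda>p. a p * monomial_val z p) summable_on M"
    and F: "\<forall>z\<in>polydisc. f z = (\<Sum>\<^sub>\<infinity>p\<in>M. a p * monomial_val z p)"
    and b: "b \<in> polydisc" and lam: "\<And>i. norm (lam i) = 1"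
    and z_def: "z = (\<lambda>t i. (lam i * t + b i) / (1 + cnj (b i) * (lam i * t)))"
  shows "(\<lambda>t. f (z t)) holomorphic_on ball 0 1"
    and "deriv (\<lambda>t. f (z t)) 0 = (\<Sum>i\<in>UNIV. lam i * of_real (1 - (norm (b i))\<^sup>2) * partial_deriv f i b)"
    and "\<And>t. t \<in> ball 0 1 \<Longrightarrow> z t \<in> polydisc"
    and "z 0 = b"
proof -
  have bi: "norm (b i) < 1" for i using b by (simp add: polydisc_def)
  have zin: "norm (z t i) < 1" if "norm t < 1" for t i
  proof -
    have "z t i = Moebius_function 0 (- b i) (lam i * t)"
      by (simp add: z_def Moebius_function_simple)
    also have "norm \<dots> < 1"
      by (rule Moebius_function_norm_lt_1) (use bi that lam in \<open>auto simp: norm_mult\<close>)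
    finally show ?thesis .
  qed
  show zP: "\<And>t. t \<in> ball 0 1 \<Longrightarrow> z t \<in> polydisc" using zin by (simp add: polydisc_def)
  show z0: "z 0 = b" by (simp add: z_def)
  have den: "1 + cnj (b i) * (lam i * t) \<noteq> 0" if "norm t < 1" for t i
  proof
    assume "1 + cnj (b i) * (lam i * t) = 0"
    hence "cnj (b i) * (lam i * t) = -1" by (simp add: add_eq_0_iff)
    hence "norm (cnj (b i) * (lam i * t)) = 1" by simp
    moreover have "norm (cnj (b i) * (lam i * t)) < 1"
    proof -
      have "norm (b i) * norm t \<le> 1 * norm t" using bi[of i] by (intro mult_right_mono) auto
      thus ?thesis using that lam[of i] by (simp add: norm_mult)
    qed
    ultimately show False by simp
  qed
  have holz: "(\<lambda>t. z t i) holomorphic_on ball 0 1" for i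
    unfolding z_def by (intro holomorphic_intros) (use den in auto)
  have zd: "((\<lambda>t. z t i) has_field_derivative deriv (\<lambda>t. z t i) t) (at t)" if "t \<in> ball 0 1" for t i
    using holomorphic_derivI[OF holz open_ball that] by simp
  have zc: "continuous_on (ball 0 1) (\<lambda>t. z t i)" for i
    using holomorphic_on_imp_continuous_on[OF holz] .
  have loc: "\<exists>D. ((\<lambda>t. f (z t)) has_field_derivative D) (at t1) \<and>
             ((\<lambda>p. a p * (\<Sum>i\<in>UNIV. deriv (\<lambda>t. z t i) t1 * mderiv (z t1) p i)) has_sum D) M"
    if t1: "t1 \<in> ball 0 1" for t1
  proof -
    define r where "r = (1 - norm t1) / 2"
    have r: "0 < r" using t1 by (simp add: r_def)
    have sub: "cball t1 r \<subseteq> ball 0 1"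
    proof
      fix t assume "t \<in> cball t1 r"
      hence "norm (t - t1) \<le> r" by (simp add: dist_norm norm_minus_commute)
      moreover have "norm t \<le> norm t1 + norm (t - t1)" using norm_triangle_ineq[of t1 "t - t1"] by simp
      ultimately show "t \<in> ball 0 1" using t1 by (simp add: r_def)
    qed
    obtain R where R: "0 \<le> R" "R < 1" "\<forall>t\<in>cball t1 r. \<forall>j. norm (z t j) \<le> R"
    proof -
      have A: "\<And>j. continuous_on (cball t1 r) (\<lambda>t. z t j)" using continuous_on_subset[OF zc sub] .
      have B: "\<And>t j. t \<in> cball t1 r \<Longrightarrow> norm (z t j) < 1" using zin sub by force
      from compact_bound[of "cball t1 r" z, OF compact_cball A B] show ?thesis using that by blast
    qed
    have gd: "\<forall>t\<in>cball t1 r. \<forall>i. ((\<lambda>t. z t i) has_field_derivative deriv (\<lambda>t. z t i) t) (at t)"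
      using zd sub by blast
    show ?thesis using path_deriv[OF S F r R(1,2) R(3) gd] by blast
  qed
  show "(\<lambda>t. f (z t)) holomorphic_on ball 0 1"
    unfolding holomorphic_on_open[OF open_ball] using loc by blast
  obtain D where D: "((\<lambda>t. f (z t)) has_field_derivative D) (at 0)"
    "((\<lambda>p. a p * (\<Sum>i\<in>UNIV. deriv (\<lambda>t. z t i) 0 * mderiv (z 0) p i)) has_sum D) M"
    using loc[of 0] by auto
  have dz: "deriv (\<lambda>t. z t i) 0 = lam i * of_real (1 - (norm (b i))\<^sup>2)" for i
  proof -
    have "((\<lambda>t. z t i) has_field_derivative
      ((lam i * (1 + cnj (b i) * (lam i * 0)) - (lam i * 0 + b i) * (cnj (b i) * lam i)) / (1 + cnj (b i) * (lam i * 0))^2)) (at 0)"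
      unfolding z_def by (rule derivative_eq_intros refl | simp)+
    hence "deriv (\<lambda>t. z t i) 0 = lam i - b i * cnj (b i) * lam i" by (simp add: DERIV_imp_deriv)
    also have "\<dots> = lam i * (1 - b i * cnj (b i))" by (simp add: algebra_simps)
    also have "b i * cnj (b i) = of_real ((norm (b i))\<^sup>2)" using complex_norm_square[of "b i"] by simp
    finally show ?thesis by simp
  qed
  have hs: "((\<lambda>p. \<Sum>i\<in>UNIV. lam i * of_real (1 - (norm (b i))\<^sup>2) * (a p * mderiv b p i)) has_sum
      (\<Sum>i\<in>UNIV. lam i * of_real (1 - (norm (b i))\<^sup>2) * partial_deriv f i b)) M"
    by (intro has_sum_sum_fin has_sum_cmult_right partial_hs[OF S F b]) auto
  have "(\<lambda>p. a p * (\<Sum>i\<in>UNIV. deriv (\<lambda>t. z t i) 0 * mderiv (z 0) p i)) =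
        (\<lambda>p. \<Sum>i\<in>UNIV. lam i * of_real (1 - (norm (b i))\<^sup>2) * (a p * mderiv b p i))"
  proof (rule ext)
    fix p
    show "a p * (\<Sum>i\<in>UNIV. deriv (\<lambda>t. z t i) 0 * mderiv (z 0) p i) =
        (\<Sum>i\<in>UNIV. lam i * of_real (1 - (norm (b i))\<^sup>2) * (a p * mderiv b p i))"
      unfolding sum_distrib_left by (rule sum.cong[OF refl]) (simp only: dz z0 mult_ac)
  qed
  with D(2) have "((\<lambda>p. \<Sum>i\<in>UNIV. lam i * of_real (1 - (norm (b i))\<^sup>2) * (a p * mderiv b p i)) has_sum D) M"
    by simp
  from has_sum_unique[OF this hs] have "D = (\<Sum>i\<in>UNIV. lam i * of_real (1 - (norm (b i))\<^sup>2) * partial_deriv f i b)" .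
  thus "deriv (\<lambda>t. f (z t)) 0 = (\<Sum>i\<in>UNIV. lam i * of_real (1 - (norm (b i))\<^sup>2) * partial_deriv f i b)"
    using DERIV_imp_deriv[OF D(1)] by simp
qed



lemma root_sum:
  fixes N l :: nat assumes l: "0 < l" "l < N"
  shows "(\<Sum>j<N. cis (real (2*j+1) * pi / real N) ^ l) = 0"
proof -
  define x where "x = cis (2 * real l * pi / real N)"
  have N: "real N > 0" using l by simp
  have eq: "cis (real (2*j+1) * pi / real N) ^ l = cis (real l * pi / real N) * x ^ j" for j
  proof -
    have "cis (real (2*j+1) * pi / real N) ^ l = cis (real l * (real (2*j+1) * pi / real N))"
      by (simp add: Complex.DeMoivre)
    also have "\<dots> = cis (real l * pi / real N + real j * (2 * real l * pi / real N))"
      by (simp add: algebra_simps add_divide_distrib)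
    also have "\<dots> = cis (real l * pi / real N) * x ^ j"
      by (simp add: x_def Complex.DeMoivre cis_mult)
    finally show ?thesis .
  qed
  have xN: "x ^ N = 1"
    using N cis_multiple_2pi[of "real l"] by (simp add: x_def Complex.DeMoivre mult_ac)
  have x1: "x \<noteq> 1"
  proof
    assume "x = 1"
    hence "cos (2 * real l * pi / real N) = 1" unfolding x_def by (metis cis.sel(1) one_complex.sel(1))
    then obtain n :: int where n: "2 * real l * pi / real N = real_of_int n * 2 * pi"
      using cos_one_2pi_int by blast
    hence "real l = real_of_int n * real N" using N by (simp add: field_simps)
    hence "int l = n * int N" by (metis of_int_eq_iff of_int_mult of_int_of_nat_eq)
    moreover have "0 < int l" "int l < int N" using l by auto
    moreover have "n * int N \<le> 0 \<or> n * int N \<ge> int N"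
    proof (cases "n \<le> 0")
      case True thus ?thesis by (simp add: mult_nonpos_nonneg)
    next
      case False hence "1 * int N \<le> n * int N" by (intro mult_right_mono) auto
      thus ?thesis by simp
    qed
    ultimately show False by linarith
  qed
  have "(\<Sum>j<N. cis (real (2*j+1) * pi / real N) ^ l) = cis (real l * pi / real N) * (\<Sum>j<N. x ^ j)"
    unfolding eq by (simp add: sum_distrib_left)
  also have "(\<Sum>j<N. x ^ j) = 0" using x1 xN by (simp add: sum_gp_strict)
  finally show ?thesis by simp
qed

lemma sum_if01: "(\<Sum>(n::nat)\<le>K. (if n = 0 then A else if n = 1 then B else 0)) = A + (if K \<ge> 1 then B else (0::complex))"
  by (induct K) auto

lemma sum_zero_pow: "(\<Sum>(n::nat)\<le>K. c n * (0::complex)^n) = c 0"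
  by (induct K) auto

lemma fes:
  fixes c :: "nat \<Rightarrow> complex" and m :: nat
  assumes cz: "c (Suc m) = 0" and re: "\<And>t. norm t < 1 \<Longrightarrow> Re (\<Sum>n\<le>Suc m. c n * t^n) \<le> 1"
  shows "norm (c 1) \<le> 2 * (1 - Re (c 0)) * cos (pi / (real m + 2))"
proof -
  define N where "N = m + 2"
  define \<beta> where "\<beta> = pi / real N"
  have Nr: "real N = real m + 2" by (simp add: N_def)
  have Npos: "real N > 0" by (simp add: N_def)
  have bN: "\<beta> = pi / (real m + 2)" by (simp add: \<beta>_def Nr)
  have c0: "Re (c 0) \<le> 1" using re[of 0] sum_zero_pow[of c "Suc m"] by simp
  have bpos: "0 < \<beta>" using Npos by (simp add: \<beta>_def)
  have ble: "\<beta> \<le> pi / 2" unfolding bN by (rule divide_left_mono) auto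
  have cb: "0 \<le> cos \<beta>" by (rule cos_ge_zero) (use bpos ble in auto)
  have rhs0: "0 \<le> 2 * (1 - Re (c 0)) * cos \<beta>" using c0 cb by simp
  show ?thesis
  proof (cases "m = 0 \<or> c 1 = 0")
    case True
    hence "c 1 = 0" using cz by auto
    thus ?thesis using rhs0 bN by simp
  next
    case False
    hence m1: "m \<ge> 1" and c1: "c 1 \<noteq> 0" by auto
    define \<zeta> where "\<zeta> j = cis (real (2*j+1) * pi / real N)" for j
    have S: "(\<Sum>j<N. \<zeta> j ^ l) = 0" if "0 < l" "l < N" for l unfolding \<zeta>_def using root_sum that by blast
    have S1: "(\<Sum>j<N. \<zeta> j) = 0" using S[of 1] by (simp add: N_def)
    have nz: "norm (\<zeta> j) = 1" for j by (simp add: \<zeta>_def)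
    have cz1: "cnj (\<zeta> j) * \<zeta> j = 1" for j
      using complex_norm_square[of "\<zeta> j"] nz[of j] by (simp add: mult.commute)
    define w where "w j = cos \<beta> - Re (\<zeta> j)" for j
    have wpos: "0 \<le> w j" if j: "j < N" for j
    proof -
      define u where "u = pi / real N"
      have u: "0 < u" using Npos by (simp add: u_def)
      have uN: "real N * u = pi" using Npos by (simp add: u_def)
      define \<theta> where "\<theta> = real (2*j+1) * u"
      have Rz: "Re (\<zeta> j) = cos \<theta>" by (simp add: \<zeta>_def \<theta>_def u_def)
      have bu: "\<beta> = u" by (simp add: \<beta>_def u_def)
      have "pi / real N \<le> pi / 1" by (rule divide_left_mono) (auto simp: N_def)
      hence ule: "u \<le> pi" by (simp add: u_def)
      have th1: "u \<le> \<theta>" unfolding \<theta>_def using u by (simp add: mult_le_cancel_right1)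
      show ?thesis
      proof (cases "\<theta> \<le> pi")
        case True
        have "cos \<theta> \<le> cos u" using cos_mono_le_eq[of \<theta> u] True th1 u ule by simp
        thus ?thesis by (simp add: w_def Rz bu)
      next
        case False
        have eq2: "2*pi - \<theta> = (2 * real N - real (2*j+1)) * u"
          using uN by (simp add: \<theta>_def algebra_simps)
        have "1 \<le> 2 * real N - real (2*j+1)" using j by simp
        hence "1 * u \<le> (2 * real N - real (2*j+1)) * u" using u by (intro mult_right_mono) auto
        hence "u \<le> 2*pi - \<theta>" using eq2 by simp
        hence "cos (2*pi - \<theta>) \<le> cos u" using cos_mono_le_eq[of "2*pi - \<theta>" u] False u ule by simp
        thus ?thesis by (simp add: w_def Rz bu)
      qed
    qed
    have wexp: "of_real (w j) * \<zeta> j ^ n = of_real (cos \<beta>) * \<zeta> j ^ n - (\<zeta> j ^ Suc n + cnj (\<zeta> j) * \<zeta> j ^ n) / 2" for j n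
    proof -
      have "of_real (Re (\<zeta> j)) = (\<zeta> j + cnj (\<zeta> j)) / 2" using complex_add_cnj[of "\<zeta> j"] by simp
      thus ?thesis by (simp add: w_def algebra_simps add_divide_distrib)
    qed
    define T where "T n = (\<Sum>j<N. of_real (w j) * \<zeta> j ^ n)" for n
    have T_eq: "T n = of_real (cos \<beta>) * (\<Sum>j<N. \<zeta> j ^ n) - ((\<Sum>j<N. \<zeta> j ^ Suc n) + (\<Sum>j<N. cnj (\<zeta> j) * \<zeta> j ^ n)) / 2" for n
      unfolding T_def wexp sum_subtractf sum_divide_distrib[symmetric] sum.distrib sum_distrib_left[symmetric] by simp
    have C0: "(\<Sum>j<N. cnj (\<zeta> j) * \<zeta> j ^ 0) = 0"
    proof -
      have "cnj (\<Sum>j<N. \<zeta> j) = 0" using S1 by simp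
      hence "(\<Sum>j<N. cnj (\<zeta> j)) = 0" by simp
      thus ?thesis by simp
    qed
    have Cn: "(\<Sum>j<N. cnj (\<zeta> j) * \<zeta> j ^ n) = (\<Sum>j<N. \<zeta> j ^ (n - 1))" if "n \<ge> 1" for n
    proof -
      define k where "k = n - 1"
      have k: "n = Suc k" using that by (simp add: k_def)
      have "cnj (\<zeta> j) * \<zeta> j ^ n = \<zeta> j ^ (n - 1)" for j
      proof -
        have "cnj (\<zeta> j) * \<zeta> j ^ n = (cnj (\<zeta> j) * \<zeta> j) * \<zeta> j ^ k"
          by (simp only: k power_Suc mult.assoc)
        thus ?thesis using cz1[of j] by (simp add: k)
      qed
      thus ?thesis by simp
    qed
    have T0: "T 0 = of_nat N * of_real (cos \<beta>)"
      using T_eq[of 0] S1 C0 by simp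
    have T1: "T 1 = - of_nat N / 2"
    proof -
      have N2: "Suc 1 < N" using m1 by (simp add: N_def)
      have a: "(\<Sum>j<N. \<zeta> j ^ Suc 1) = 0" using S[of "Suc 1"] N2 by simp
      have b: "(\<Sum>j<N. \<zeta> j ^ 1) = 0" using S1 by simp
      have c: "(\<Sum>j<N. cnj (\<zeta> j) * \<zeta> j ^ 1) = of_nat N" using Cn[of 1] by simp
      have "T 1 = of_real (cos \<beta>) * (\<Sum>j<N. \<zeta> j ^ 1) - ((\<Sum>j<N. \<zeta> j ^ Suc 1) + (\<Sum>j<N. cnj (\<zeta> j) * \<zeta> j ^ 1)) / 2"
        by (rule T_eq)
      also have "\<dots> = - of_nat N / 2" by (simp only: a b c) simp
      finally show ?thesis .
    qed
    have Tn: "T n = 0" if "2 \<le> n" "n \<le> m" for n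
    proof -
      have lt: "Suc n < N" using that by (simp add: N_def)
      have a: "(\<Sum>j<N. \<zeta> j ^ n) = 0" using S[of n] that lt by simp
      have b: "(\<Sum>j<N. \<zeta> j ^ Suc n) = 0" using S[of "Suc n"] lt by simp
      have c: "(\<Sum>j<N. cnj (\<zeta> j) * \<zeta> j ^ n) = 0" using Cn[of n] S[of "n - 1"] that lt by simp
      have "T n = of_real (cos \<beta>) * (\<Sum>j<N. \<zeta> j ^ n) - ((\<Sum>j<N. \<zeta> j ^ Suc n) + (\<Sum>j<N. cnj (\<zeta> j) * \<zeta> j ^ n)) / 2"
        by (rule T_eq)
      also have "\<dots> = 0" by (simp only: a b c) simp
      finally show ?thesis .
    qed
    have key: "r * norm (c 1) \<le> 2 * (1 - Re (c 0)) * cos \<beta>" if r: "0 < r" "r < 1" for r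
    proof -
      define \<sigma> where "\<sigma> = - cnj (c 1) / of_real (norm (c 1))"
      have c1\<sigma>: "c 1 * \<sigma> = - of_real (norm (c 1))"
      proof -
        have nn: "complex_of_real (norm (c 1)) \<noteq> 0" using c1 by simp
        have e: "c 1 * cnj (c 1) = of_real (norm (c 1)) * of_real (norm (c 1))"
          using complex_norm_square[of "c 1"] by (simp add: power2_eq_square)
        have "c 1 * \<sigma> = - (c 1 * cnj (c 1)) / of_real (norm (c 1))" by (simp add: \<sigma>_def)
        also have "\<dots> = - of_real (norm (c 1))" unfolding e using nn by simp
        finally show ?thesis .
      qed
      have n\<sigma>: "norm \<sigma> = 1" using c1 by (simp add: \<sigma>_def norm_divide)
      define P where "P t = (\<Sum>n\<le>Suc m. c n * t^n)" for t
      have Pt: "Re (P (of_real r * \<sigma> * \<zeta> j)) \<le> 1" for j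
        unfolding P_def by (rule re) (use r n\<sigma> nz in \<open>simp add: norm_mult\<close>)
      have "(\<Sum>j<N. of_real (w j) * P (of_real r * \<sigma> * \<zeta> j)) =
            (\<Sum>j<N. \<Sum>n\<le>Suc m. c n * (of_real r * \<sigma>)^n * (of_real (w j) * \<zeta> j ^ n))"
        unfolding P_def sum_distrib_left by (intro sum.cong refl) (simp add: power_mult_distrib mult_ac)
      also have "\<dots> = (\<Sum>n\<le>Suc m. \<Sum>j<N. c n * (of_real r * \<sigma>)^n * (of_real (w j) * \<zeta> j ^ n))"
        by (rule sum.swap)
      also have "\<dots> = (\<Sum>n\<le>Suc m. c n * (of_real r * \<sigma>)^n * T n)"
        by (simp add: T_def sum_distrib_left)
      also have "\<dots> = (\<Sum>n\<le>Suc m. (if n = 0 then c 0 * (of_nat N * of_real (cos \<beta>))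
              else if n = 1 then c 1 * (of_real r * \<sigma>) * (- of_nat N / 2) else 0))"
      proof (rule sum.cong[OF refl])
        fix n assume n: "n \<in> {..Suc m}"
        show "c n * (of_real r * \<sigma>)^n * T n = (if n = 0 then c 0 * (of_nat N * of_real (cos \<beta>))
              else if n = 1 then c 1 * (of_real r * \<sigma>) * (- of_nat N / 2) else 0)"
        proof (cases "n = 0 \<or> n = 1 \<or> n = Suc m")
          case True thus ?thesis using T0 T1 cz m1 by auto
        next
          case False thus ?thesis using Tn[of n] n by auto
        qed
      qed
      also have "\<dots> = c 0 * (of_nat N * of_real (cos \<beta>)) + c 1 * (of_real r * \<sigma>) * (- of_nat N / 2)"
        by (subst sum_if01) simp
      also have "\<dots> = of_real (real N * cos \<beta>) * c 0 - of_real (real N * r / 2) * (c 1 * \<sigma>)"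
        by (simp add: algebra_simps)
      also have "\<dots> = of_real (real N * cos \<beta>) * c 0 + of_real (real N * r / 2 * norm (c 1))"
        using c1\<sigma> by simp
      finally have E: "(\<Sum>j<N. of_real (w j) * P (of_real r * \<sigma> * \<zeta> j)) =
          of_real (real N * cos \<beta>) * c 0 + of_real (real N * r / 2 * norm (c 1))" .
      have "Re (\<Sum>j<N. of_real (w j) * P (of_real r * \<sigma> * \<zeta> j)) = (\<Sum>j<N. w j * Re (P (of_real r * \<sigma> * \<zeta> j)))"
        by simp
      also have "\<dots> \<le> (\<Sum>j<N. w j * 1)"
        by (intro sum_mono mult_left_mono Pt wpos) auto
      also have "\<dots> = real N * cos \<beta> - Re (\<Sum>j<N. \<zeta> j)"
        by (simp add: w_def sum_subtractf)
      also have "\<dots> = real N * cos \<beta>" using S1 by simp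
      finally have "real N * cos \<beta> * Re (c 0) + real N * r / 2 * norm (c 1) \<le> real N * cos \<beta>"
        unfolding E by simp
      hence "real N * (cos \<beta> * Re (c 0) + r / 2 * norm (c 1)) \<le> real N * cos \<beta>"
        by (simp add: algebra_simps)
      hence "cos \<beta> * Re (c 0) + r / 2 * norm (c 1) \<le> cos \<beta>"
        using Npos by (simp add: mult_le_cancel_left_pos)
      thus ?thesis by (simp add: algebra_simps)
    qed
    have "norm (c 1) \<le> 2 * (1 - Re (c 0)) * cos \<beta>"
      by (rule field_le_mult_one_interval) (use key in auto)
    thus ?thesis using bN by simp
  qed
qed



lemma unit_align: "\<exists>l::complex. norm l = 1 \<and> l * d = of_real (norm d)"
proof (cases "d = 0")
  case True thus ?thesis by (intro exI[of _ 1]) simp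
next
  case False
  have nn: "complex_of_real (norm d) \<noteq> 0" using False by simp
  have e: "cnj d * d = of_real (norm d) * of_real (norm d)"
    using complex_norm_square[of d] by (simp add: power2_eq_square mult.commute)
  have "cnj d / of_real (norm d) * d = of_real (norm d)"
    using nn by (simp add: e)
  moreover have "norm (cnj d / of_real (norm d)) = 1" using False by (simp add: norm_divide)
  ultimately show ?thesis by blast
qed

lemma main_inf:
  fixes a :: "('k::finite \<Rightarrow> nat) \<Rightarrow> complex"
  assumes S: "\<forall>z\<in>polydisc. (\<lambda>p. a p * monomial_val z p) summable_on M"
    and F: "\<forall>z\<in>polydisc. f z = (\<Sum>\<^sub>\<infinity>p\<in>M. a p * monomial_val z p)"
    and re_le: "\<forall>z\<in>polydisc. Re (f z) \<le> 1"
    and b: "b \<in> polydisc"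
  shows "(\<Sum>i\<in>UNIV. (1 - (norm (b i))\<^sup>2) * norm (partial_deriv f i b)) \<le> 2 * (1 - Re (f b))"
proof -
  define d where "d i = partial_deriv f i b" for i
  obtain lam where lam: "\<And>i. norm (lam i) = 1" "\<And>i. lam i * d i = of_real (norm (d i))"
    using unit_align[of "d _"] by metis
  define z where "z = (\<lambda>t i. (lam i * t + b i) / (1 + cnj (b i) * (lam i * t)))"
  note ch = chain[OF S F b lam(1) z_def]
  have bi: "norm (b i) < 1" for i using b by (simp add: polydisc_def)
  have "deriv (\<lambda>t. f (z t)) 0 = (\<Sum>i\<in>UNIV. of_real ((1 - (norm (b i))\<^sup>2) * norm (d i)))"
    unfolding ch(2) by (rule sum.cong[OF refl]) (simp add: d_def[symmetric] lam(2)[symmetric] mult_ac)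
  also have "\<dots> = of_real (\<Sum>i\<in>UNIV. (1 - (norm (b i))\<^sup>2) * norm (d i))" by simp
  finally have "norm (deriv (\<lambda>t. f (z t)) 0) = \<bar>\<Sum>i\<in>UNIV. (1 - (norm (b i))\<^sup>2) * norm (d i)\<bar>"
    by (simp only: norm_of_real)
  moreover have "0 \<le> (\<Sum>i\<in>UNIV. (1 - (norm (b i))\<^sup>2) * norm (d i))"
  proof (intro sum_nonneg mult_nonneg_nonneg)
    fix i
    have "(norm (b i))\<^sup>2 \<le> 1" using bi[of i] by (simp add: power_le_one)
    thus "0 \<le> 1 - (norm (b i))\<^sup>2" by simp
  qed simp
  moreover have "norm (deriv (\<lambda>t. f (z t)) 0) \<le> 2 * (1 - Re (f (z 0)))"
    by (rule carath[OF ch(1)]) (use re_le ch(3) in blast)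
  ultimately show ?thesis by (simp add: ch(4) d_def)
qed

lemma finite_mindices: "finite (mindices (enat n) :: ('k::finite \<Rightarrow> nat) set)"
proof (rule finite_subset)
  show "mindices (enat n) \<subseteq> (PiE UNIV (\<lambda>_. {..n}) :: ('k \<Rightarrow> nat) set)"
  proof
    fix p :: "'k \<Rightarrow> nat" assume "p \<in> mindices (enat n)"
    hence "mdeg p \<le> n" by (simp add: mindices_def)
    moreover have "p i \<le> mdeg p" for i unfolding mdeg_def by (rule member_le_sum) auto
    ultimately show "p \<in> PiE UNIV (\<lambda>_. {..n})" by (auto simp: PiE_UNIV_domain intro: le_trans)
  qed
  show "finite (PiE UNIV (\<lambda>_. {..n}) :: ('k \<Rightarrow> nat) set)" by (rule finite_PiE) auto
qed

lemma deriv_poly0: "(\<Sum>k\<le>K. C k * (of_nat k * (1 * (0::complex) ^ (k - Suc 0)))) = (if K \<ge> 1 then C 1 else 0)"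
proof (induct K)
  case 0 show ?case by simp
next
  case (Suc K) thus ?case by (cases K) auto
qed

lemma mono_scale:
  fixes lam :: "'k::finite \<Rightarrow> complex"
  shows "monomial_val (\<lambda>i. lam i * t) p = monomial_val lam p * t ^ mdeg p"
  by (simp add: monomial_val_def mdeg_def power_mult_distrib prod.distrib power_sum)

lemma main_fin:
  fixes a :: "('k::finite \<Rightarrow> nat) \<Rightarrow> complex"
  assumes S: "\<forall>z\<in>polydisc. (\<lambda>p. a p * monomial_val z p) summable_on mindices (enat n)"
    and F: "\<forall>z\<in>polydisc. f z = (\<Sum>\<^sub>\<infinity>p\<in>mindices (enat n). a p * monomial_val z p)"
    and re_le: "\<forall>z\<in>polydisc. Re (f z) \<le> 1"
  shows "(\<Sum>i\<in>UNIV. norm (partial_deriv f i (\<lambda>_. 0))) \<le> 2 * (1 - Re (f (\<lambda>_. 0))) * cos (pi / (real n + 2))"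
proof -
  define M where "M = (mindices (enat n) :: ('k \<Rightarrow> nat) set)"
  have finM: "finite M" unfolding M_def by (rule finite_mindices)
  define b where "b = (\<lambda>_::'k. 0::complex)"
  have b: "b \<in> polydisc" by (simp add: b_def polydisc_def)
  have b0: "\<And>i. b i = 0" by (simp add: b_def)
  define d where "d i = partial_deriv f i b" for i
  obtain lam where lam: "\<And>i. norm (lam i) = 1" "\<And>i. lam i * d i = of_real (norm (d i))"
    using unit_align[of "d _"] by metis
  define z where "z = (\<lambda>t i. (lam i * t + b i) / (1 + cnj (b i) * (lam i * t)))"
  have zt: "z t = (\<lambda>i. lam i * t)" for t by (simp add: z_def b_def)
  note ch = chain[OF S F b lam(1) z_def]
  define h where "h t = f (z t)" for t
  define C where "C k = (\<Sum>p\<in>{p\<in>M. mdeg p = k}. a p * monomial_val lam p)" for k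
  define Q where "Q t = (\<Sum>k\<le>Suc n. C k * t ^ k)" for t
  have hQ: "h t = Q t" if "t \<in> ball 0 1" for t
  proof -
    have "h t = (\<Sum>p\<in>M. a p * monomial_val (z t) p)"
      using F ch(3)[OF that] finM by (simp add: h_def M_def)
    also have "\<dots> = (\<Sum>p\<in>M. a p * monomial_val lam p * t ^ mdeg p)"
      by (simp add: zt mono_scale mult.assoc)
    also have "\<dots> = (\<Sum>k\<le>Suc n. \<Sum>p\<in>{p\<in>M. mdeg p = k}. a p * monomial_val lam p * t ^ mdeg p)"
      by (rule sum.group[symmetric]) (use finM in \<open>auto simp: M_def mindices_def\<close>)
    also have "\<dots> = Q t"
      unfolding Q_def C_def sum_distrib_right by (intro sum.cong refl) auto
    finally show ?thesis .
  qed
  have "{p\<in>M. mdeg p = Suc n} = {}" by (auto simp: M_def mindices_def)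
  hence Cz: "C (Suc n) = 0" unfolding C_def by (simp only: sum.empty)
  have hQ0: "Q 0 = C 0" unfolding Q_def using sum_zero_pow[of C "Suc n"] by simp
  have fes_app: "norm (C 1) \<le> 2 * (1 - Re (C 0)) * cos (pi / (real n + 2))"
  proof (rule fes[of C n, OF Cz])
    fix t :: complex assume "norm t < 1"
    hence tb: "t \<in> ball 0 1" by simp
    have "Re (f (z t)) \<le> 1" using re_le ch(3)[OF tb] by blast
    hence "Re (Q t) \<le> 1" using hQ[OF tb] by (simp add: h_def)
    thus "Re (\<Sum>k\<le>Suc n. C k * t ^ k) \<le> 1" by (simp add: Q_def)
  qed
  have "(Q has_field_derivative (\<Sum>k\<le>Suc n. C k * (of_nat k * (1 * 0 ^ (k - Suc 0))))) (at 0)"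
    unfolding Q_def by (intro DERIV_sum DERIV_cmult DERIV_power DERIV_ident)
  hence "(Q has_field_derivative C 1) (at 0)" by (simp only: deriv_poly0) simp
  hence "(h has_field_derivative C 1) (at 0)"
    by (rule has_field_derivative_transform_within_open[where S="ball 0 1"]) (auto simp: hQ)
  hence dh: "deriv h 0 = C 1" by (rule DERIV_imp_deriv)
  have "deriv h 0 = (\<Sum>i\<in>UNIV. of_real (norm (d i)))"
    unfolding h_def ch(2) by (rule sum.cong[OF refl]) (simp add: b0 d_def[symmetric] lam(2)[symmetric] mult_ac)
  also have "\<dots> = of_real (\<Sum>i\<in>UNIV. norm (d i))" by simp
  finally have "C 1 = of_real (\<Sum>i\<in>UNIV. norm (d i))" using dh by simp
  hence "norm (C 1) = \<bar>\<Sum>i\<in>UNIV. norm (d i)\<bar>" by (simp only: norm_of_real)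
  hence "norm (C 1) = (\<Sum>i\<in>UNIV. norm (d i))" by (simp add: sum_nonneg)
  moreover have "C 0 = f b" using hQ[of 0] hQ0 by (simp add: h_def ch(4))
  ultimately show ?thesis using fes_app by (simp add: d_def b_def)
qed


theorem corollary6p7:
  fixes m :: enat
    and a :: "('k::finite \<Rightarrow> nat) \<Rightarrow> complex"
    and f :: "('k \<Rightarrow> complex) \<Rightarrow> complex"
  assumes summable: "\<forall>z\<in>polydisc. (\<lambda>p. a p * monomial_val z p) summable_on mindices m"
    and f_eq: "\<forall>z\<in>polydisc. f z = (\<Sum>\<^sub>\<infinity>p\<in>mindices m. a p * monomial_val z p)"
    and re_le: "\<forall>z\<in>polydisc. Re (f z) \<le> 1"
  shows "(f (\<lambda>_. 0) \<in> \<real> \<and> Re (f (\<lambda>_. 0)) \<ge> 0 \<longrightarrow>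
           (\<Sum>i\<in>UNIV. norm (partial_deriv f i (\<lambda>_. 0))) \<le> 2 * (1 - Re (f (\<lambda>_. 0))) * cos_factor m)
       \<and> (m = \<infinity> \<longrightarrow> (\<forall>b\<in>polydisc. f b \<in> \<real> \<and> Re (f b) \<ge> 0 \<longrightarrow>
           (\<Sum>i\<in>UNIV. (1 - (norm (b i))\<^sup>2) * norm (partial_deriv f i b)) \<le> 2 * (1 - Re (f b))))"
proof (intro conjI impI ballI)
  show "(\<Sum>i\<in>UNIV. norm (partial_deriv f i (\<lambda>_. 0))) \<le> 2 * (1 - Re (f (\<lambda>_. 0))) * cos_factor m"
  proof (cases m)
    case (enat n)
    show ?thesis
      using main_fin[of a n f] summable f_eq re_le by (simp add: enat cos_factor_def)
  next
    case infinity
    have "(\<lambda>_::'k. 0::complex) \<in> polydisc" by (simp add: polydisc_def)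
    from main_inf[OF summable f_eq re_le this] show ?thesis by (simp add: infinity cos_factor_def)
  qed
next
  fix b :: "'k \<Rightarrow> complex" assume "b \<in> polydisc" "f b \<in> \<real> \<and> Re (f b) \<ge> 0"
  from main_inf[OF summable f_eq re_le \<open>b \<in> polydisc\<close>]
  show "(\<Sum>i\<in>UNIV. (1 - (norm (b i))\<^sup>2) * norm (partial_deriv f i b)) \<le> 2 * (1 - Re (f b))" .
qed

end
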